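(* Let $K$ be the Knaster–Kuratowski fan defined below. Then $K+S^1$ has non-empty interior.
   Context: Let $C=C_{1/3}-\tfrac12\subset[-\tfrac12,\tfrac12]$ be the translate of the middle-third Cantor set $C_{1/3}=\{\tfrac23\sum_{k\ge1}a_k3^{-(k-1)}:a_k\in\{0,1\}\}$. Let $E\subset C$ be the set of points of $C$ which are endpoints of deleted (removed) intervals, and $F=C\setminus E$. For $c\in C$ let $\ell_c=\{(x,cx):x\in[0,1]\}$. Put $K_E=\bigcup_{c\in E}\{(x,y)\in\ell_c:x\in\mathbb{Q}\}$, $K_F=\bigcup_{c\in F}\{(x,y)\in\ell_c:x\notin\mathbb{Q}\}$, and $K=K_E\cup K_F$. $S^1$ is the Euclidean unit circle and $X+Y=\{x+y:x\in X,y\in Y\}$. *)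

theory Defs
  imports "HOL-Analysis.Analysis"
begin

text \<open>The translated middle-third Cantor set C = C_{1/3} - 1/2.\<close>
definition cantorC :: "real set" where
  "cantorC = {(\<Sum>n. (if a n then 1 else 0) * ((2/3) * (1/3) ^ n)) - 1/2 | a :: nat \<Rightarrow> bool. True}"

definition deleted_interval :: "real \<Rightarrow> real \<Rightarrow> bool" where
  "deleted_interval a b \<longleftrightarrow> a < b \<and> a \<in> cantorC \<and> b \<in> cantorC \<and> {a<..<b} \<inter> cantorC = {}"

definition cantorE :: "real set" where
  "cantorE = {c \<in> cantorC. \<exists>a b. deleted_interval a b \<and> (c = a \<or> c = b)}"

definition cantorF :: "real set" where
  "cantorF = cantorC - cantorE"

text \<open>The plane is modelled as the complex numbers; (x,y) is Complex x y.\<close>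
definition KK_E :: "complex set" where
  "KK_E = (\<Union>c\<in>cantorE. {Complex x (c * x) | x. x \<in> {0..1} \<and> x \<in> \<rat>})"

definition KK_F :: "complex set" where
  "KK_F = (\<Union>c\<in>cantorF. {Complex x (c * x) | x. x \<in> {0..1} \<and> x \<notin> \<rat>})"

definition KK_fan :: "complex set" where
  "KK_fan = KK_E \<union> KK_F"

definition set_sum :: "complex set \<Rightarrow> complex set \<Rightarrow> complex set" where
  "set_sum X Y = {x + y | x y. x \<in> X \<and> y \<in> Y}"

end

theory Submission
  imports Defs
begin


definition tt :: "(nat \<Rightarrow> bool) \<Rightarrow> nat \<Rightarrow> real" where
  "tt a n = (if a n then 1 else 0) * ((2/3) * (1/3) ^ n)"

lemma tt_bounds: "0 \<le> tt a n" "tt a n \<le> (2/3) * (1/3) ^ n"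
  by (auto simp: tt_def)

lemma geo_summ: "summable (\<lambda>n. (2/3::real) * (1/3) ^ n)"
  by (intro summable_mult summable_geometric) simp

lemma geo_sum: "(\<Sum>n. (2/3::real) * (1/3) ^ n) = 1"
proof -
  have "(\<Sum>n. (2/3::real) * (1/3) ^ n) = 2/3 * (\<Sum>n. (1/3::real) ^ n)"
    by (intro suminf_mult summable_geometric) simp
  also have "(\<Sum>n. (1/3::real) ^ n) = 3/2" by (subst suminf_geometric) auto
  finally show ?thesis by simp
qed

lemma tt_summ: "summable (tt a)"
  by (rule summable_comparison_test'[OF geo_summ, of 0]) (auto simp: tt_def)

lemma tt_sum_bounds: "0 \<le> suminf (tt a)" "suminf (tt a) \<le> 1"
proof -
  show "0 \<le> suminf (tt a)" by (intro suminf_nonneg tt_summ tt_bounds)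
  have "suminf (tt a) \<le> (\<Sum>n. (2/3::real) * (1/3) ^ n)"
    by (intro suminf_le tt_summ geo_summ tt_bounds)
  then show "suminf (tt a) \<le> 1" using geo_sum by simp
qed

lemma tt_inj: "inj (\<lambda>a. suminf (tt a))"
proof (rule injI, rule ccontr)
  fix a b :: "nat \<Rightarrow> bool"
  assume eq: "suminf (tt a) = suminf (tt b)" and ne: "a \<noteq> b"
  then obtain m where "a m \<noteq> b m" by auto
  define n where "n = (LEAST k. a k \<noteq> b k)"
  have nd: "a n \<noteq> b n" unfolding n_def by (rule LeastI[of _ m]) fact
  have lt: "k < n \<Longrightarrow> a k = b k" for k unfolding n_def using not_less_Least by blast
  define d where "d k = tt a k - tt b k" for k
  have sd: "summable d" unfolding d_def by (intro summable_diff tt_summ)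
  have "suminf d = 0" unfolding d_def using eq suminf_diff[OF tt_summ[of a] tt_summ[of b]] by simp
  moreover have "suminf d = (\<Sum>k. d (k + Suc n)) + (\<Sum>i<Suc n. d i)"
    by (rule suminf_split_initial_segment[OF sd])
  moreover have "(\<Sum>i<Suc n. d i) = d n"
    using lt by (simp add: d_def tt_def)
  moreover have "\<bar>d n\<bar> = 2 * (1/3) ^ Suc n"
    using nd by (auto simp: d_def tt_def)
  moreover have "\<bar>\<Sum>k. d (k + Suc n)\<bar> \<le> (1/3) ^ Suc n"
  proof -
    have g: "summable (\<lambda>k. (2/3::real) * (1/3) ^ (k + Suc n))"
      using summable_ignore_initial_segment[OF geo_summ, of "Suc n"] by simp
    have "\<bar>\<Sum>k. d (k + Suc n)\<bar> \<le> (\<Sum>k. (2/3::real) * (1/3) ^ (k + Suc n))"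
    proof -
      have "norm (\<Sum>k. d (k + Suc n)) \<le> (\<Sum>k. (2/3::real) * (1/3) ^ (k + Suc n))"
      proof -
        have b: "norm (d (k + Suc n)) \<le> (2/3::real) * (1/3) ^ (k + Suc n)" for k
          by (auto simp: d_def tt_def)
        have s1: "summable (\<lambda>k. norm (d (k + Suc n)))"
          by (rule summable_comparison_test'[OF g, of 0]) (use b in auto)
        have "norm (\<Sum>k. d (k + Suc n)) \<le> (\<Sum>k. norm (d (k + Suc n)))"
          by (rule summable_norm[OF s1])
        also have "\<dots> \<le> (\<Sum>k. (2/3::real) * (1/3) ^ (k + Suc n))"
          by (rule suminf_le[OF b s1 g])
        finally show ?thesis .
      qed
      then show ?thesis by simp
    qed
    also have "(\<Sum>k. (2/3::real) * (1/3) ^ (k + Suc n)) = (1/3)^Suc n * (\<Sum>k. (2/3::real) * (1/3) ^ k)"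
      by (subst suminf_mult[symmetric]) (auto simp: geo_summ power_add mult_ac)
    finally show ?thesis using geo_sum by simp
  qed
  moreover have "(1/3::real)^Suc n > 0" by simp
  ultimately show False by linarith
qed

lemma uncountable_nat_bool: "uncountable (UNIV :: (nat \<Rightarrow> bool) set)"
proof -
  have "range f \<noteq> UNIV" for f :: "nat \<Rightarrow> nat \<Rightarrow> bool"
  proof
    assume "range f = UNIV"
    then obtain n where "f n = (\<lambda>k. \<not> f k k)" by (metis UNIV_I imageE)
    then show False by (metis)
  qed
  then show ?thesis unfolding uncountable_def by auto
qed

lemma cantorC_eq: "cantorC = (\<lambda>a. suminf (tt a) - 1/2) ` UNIV"
  unfolding cantorC_def tt_def by auto

lemma cantorC_unc: "uncountable cantorC"
proof
  assume "countable cantorC"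
  then have "countable ((\<lambda>a. suminf (tt a) - 1/2) ` UNIV)" by (simp add: cantorC_eq)
  moreover have "inj (\<lambda>a. suminf (tt a) - 1/2)" using tt_inj by (simp add: inj_def)
  ultimately have "countable (UNIV :: (nat \<Rightarrow> bool) set)" by (rule countable_image_inj_on)
  then show False using uncountable_nat_bool by simp
qed

lemma cantorC_bound: "c \<in> cantorC \<Longrightarrow> \<bar>c\<bar> \<le> 1/2"
proof -
  assume "c \<in> cantorC"
  then obtain a where "c = suminf (tt a) - 1/2" unfolding cantorC_eq by auto
  then show ?thesis using tt_sum_bounds[of a] by (simp add: abs_if)
qed



lemma del_left_uniq:
  assumes "deleted_interval c b" "deleted_interval c' b'" "c < q" "q < b" "c' < q" "q < b'"
  shows "c = c'"
proof (rule ccontr)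
  assume "c \<noteq> c'"
  then consider "c < c'" | "c' < c" by linarith
  then show False
  proof cases
    case 1
    have m1: "c' \<in> cantorC" and m2: "{c<..<b} \<inter> cantorC = {}" using assms by (auto simp: deleted_interval_def)
    have "c' \<in> {c<..<b}" using 1 assms by auto
    then show False using m1 m2 by blast
  next
    case 2
    have m1: "c \<in> cantorC" and m2: "{c'<..<b'} \<inter> cantorC = {}" using assms by (auto simp: deleted_interval_def)
    have "c \<in> {c'<..<b'}" using 2 assms by auto
    then show False using m1 m2 by blast
  qed
qed

lemma del_right_uniq:
  assumes "deleted_interval a c" "deleted_interval a' c'" "a < q" "q < c" "a' < q" "q < c'"
  shows "c = c'"
proof (rule ccontr)
  assume "c \<noteq> c'"
  then consider "c < c'" | "c' < c" by linarith
  then show False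
  proof cases
    case 1
    have m1: "c \<in> cantorC" and m2: "{a'<..<c'} \<inter> cantorC = {}" using assms by (auto simp: deleted_interval_def)
    have "c \<in> {a'<..<c'}" using 1 assms by auto
    then show False using m1 m2 by blast
  next
    case 2
    have m1: "c' \<in> cantorC" and m2: "{a<..<c} \<inter> cantorC = {}" using assms by (auto simp: deleted_interval_def)
    have "c' \<in> {a<..<c}" using 2 assms by auto
    then show False using m1 m2 by blast
  qed
qed

definition PP :: "real \<Rightarrow> real \<times> bool \<Rightarrow> bool" where
  "PP c p \<longleftrightarrow> fst p \<in> \<rat> \<and> ((snd p \<and> (\<exists>b. deleted_interval c b \<and> c < fst p \<and> fst p < b))
      \<or> (\<not> snd p \<and> (\<exists>a. deleted_interval a c \<and> a < fst p \<and> fst p < c)))"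

lemma cantorE_countable: "countable cantorE"
proof -
  define f where "f c = (SOME p. PP c p)" for c
  have ex: "\<exists>p. PP c p" if "c \<in> cantorE" for c
  proof -
    from that obtain a b where ab: "deleted_interval a b" "c = a \<or> c = b"
      unfolding cantorE_def by auto
    then have "a < b" by (simp add: deleted_interval_def)
    then obtain q where q: "q \<in> \<rat>" "a < q" "q < b" using Rats_dense_in_real by blast
    show ?thesis
    proof (cases "c = a")
      case True then show ?thesis using ab q by (intro exI[of _ "(q, True)"]) (auto simp: PP_def)
    next
      case False then show ?thesis using ab q by (intro exI[of _ "(q, False)"]) (auto simp: PP_def)
    qed
  qed
  have Pf: "PP c (f c)" if "c \<in> cantorE" for c
    unfolding f_def using ex[OF that] by (rule someI_ex)
  have "inj_on f cantorE"
  proof (rule inj_onI)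
    fix c c' assume c: "c \<in> cantorE" and c': "c' \<in> cantorE" and eq: "f c = f c'"
    have 1: "PP c (f c)" "PP c' (f c)" using Pf[OF c] Pf[OF c'] eq by auto
    show "c = c'"
    proof (cases "snd (f c)")
      case True then show ?thesis using 1 del_left_uniq unfolding PP_def by metis
    next
      case False then show ?thesis using 1 del_right_uniq unfolding PP_def by metis
    qed
  qed
  moreover have "f ` cantorE \<subseteq> \<rat> \<times> UNIV"
    using Pf unfolding PP_def by (auto simp: image_subset_iff mem_Times_iff)
  moreover have "countable (\<rat> \<times> (UNIV :: bool set))"
    by (intro countable_SIGMA countable_rat) auto
  ultimately show ?thesis
    using countable_image_inj_on countable_subset by blast
qed

lemma cantorF_unc: "uncountable cantorF"
  unfolding cantorF_def by (intro uncountable_minus_countable cantorC_unc cantorE_countable)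



lemma circle_hit:
  fixes a b c :: real
  assumes "a^2 + b^2 \<le> 1" "(1 - a)^2 \<ge> 1"
  shows "\<exists>x. 0 \<le> x \<and> x \<le> 1 \<and> (x - a)^2 + (c*x - b)^2 = 1"
proof -
  let ?f = "\<lambda>x. (x - a)^2 + (c*x - b)^2"
  have "?f 0 \<le> 1" using assms by simp
  moreover have "1 \<le> (1 - a)^2 + (c*1 - b)^2" using assms(2) zero_le_power2[of "c*1-b"] by linarith
  moreover have "continuous_on {0..1} ?f" by (intro continuous_intros)
  ultimately show ?thesis using IVT'[of ?f 0 1 1] by auto
qed

lemma key_inj:
  fixes a b c c' x :: real
  assumes "a^2 + b^2 < 1" "b < -1/2" "\<bar>c\<bar> \<le> 1/2" "\<bar>c'\<bar> \<le> 1/2" "0 \<le> x" "x \<le> 1"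
    "(x - a)^2 + (c*x - b)^2 = 1" "(x - a)^2 + (c'*x - b)^2 = 1"
  shows "c = c'"
proof -
  have x0: "x \<noteq> 0" using assms by auto
  have "(c*x - b)^2 = (c'*x - b)^2" using assms by linarith
  then have "c*x - b = c'*x - b \<or> c*x - b = -(c'*x - b)" using power2_eq_iff by blast
  moreover have "\<bar>c*x\<bar> \<le> 1/2"
  proof -
    have "\<bar>c*x\<bar> = \<bar>c\<bar>*x" using assms by (simp add: abs_mult)
    also have "\<dots> \<le> 1/2 * 1" by (rule mult_mono) (use assms in auto)
    finally show ?thesis by simp
  qed
  moreover have "\<bar>c'*x\<bar> \<le> 1/2"
  proof -
    have "\<bar>c'*x\<bar> = \<bar>c'\<bar>*x" using assms by (simp add: abs_mult)
    also have "\<dots> \<le> 1/2 * 1" by (rule mult_mono) (use assms in auto)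
    finally show ?thesis by simp
  qed
  ultimately have "c*x = c'*x" using assms by auto
  then show ?thesis using x0 by simp
qed

theorem mainTheorem7:
  shows "interior (set_sum KK_fan (sphere 0 1)) \<noteq> {}"
proof -
  define z0 where "z0 = Complex (-3/10) (-6/10)"
  have sub: "ball z0 (1/20) \<subseteq> set_sum KK_fan (sphere 0 1)"
  proof
    fix z assume z: "z \<in> ball z0 (1/20)"
    define a where "a = Re z"
    define b where "b = Im z"
    have "\<bar>Re (z - z0)\<bar> < 1/20" "\<bar>Im (z - z0)\<bar> < 1/20"
      using z abs_Re_le_cmod[of "z - z0"] abs_Im_le_cmod[of "z - z0"]
      by (auto simp: dist_norm norm_minus_commute)
    then have "\<bar>a + 3/10\<bar> < 1/20" "\<bar>b + 3/5\<bar> < 1/20"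
      by (simp_all add: a_def b_def z0_def)
    then have ab: "-7/20 < a" "a < -5/20" "-13/20 < b" "b < -11/20"
      by linarith+
    have h1: "a^2 + b^2 < 1"
    proof -
      have "\<bar>a\<bar>^2 < (7/20)^2" by (rule power_strict_mono) (use ab in auto)
      moreover have "\<bar>b\<bar>^2 < (13/20)^2" by (rule power_strict_mono) (use ab in auto)
      ultimately show ?thesis by (simp add: power2_eq_square)
    qed
    have h2: "(1 - a)^2 \<ge> 1" by (rule one_le_power) (use ab in linarith)
    define X where "X c = (SOME x. 0 \<le> x \<and> x \<le> 1 \<and> (x - a)^2 + (c*x - b)^2 = 1)" for c
    have X: "0 \<le> X c \<and> X c \<le> 1 \<and> (X c - a)^2 + (c * X c - b)^2 = 1" for c
      unfolding X_def by (rule someI_ex) (rule circle_hit, use h1 h2 in auto)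
    have inj: "inj_on X cantorF"
    proof (rule inj_onI)
      fix c c' assume "c \<in> cantorF" "c' \<in> cantorF" "X c = X c'"
      then show "c = c'" using key_inj[of a b c c' "X c"] X[of c] X[of c'] h1 ab
        cantorC_bound[of c] cantorC_bound[of c'] by (auto simp: cantorF_def)
    qed
    have "\<exists>c\<in>cantorF. X c \<notin> \<rat>"
    proof (rule ccontr)
      assume "\<not> ?thesis"
      then have "X ` cantorF \<subseteq> \<rat>" by auto
      then have "countable (X ` cantorF)" using countable_rat countable_subset by blast
      then have "countable cantorF" using inj countable_image_inj_on by blast
      then show False using cantorF_unc by simp
    qed
    then obtain c where c: "c \<in> cantorF" "X c \<notin> \<rat>" by blast
    define k where "k = Complex (X c) (c * X c)"
    have kK: "k \<in> KK_fan" unfolding KK_fan_def KK_F_def k_def using c X[of c] by auto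
    have "norm (z - k) = sqrt ((a - X c)^2 + (b - c * X c)^2)"
      unfolding k_def a_def b_def by (simp add: cmod_def)
    also have "\<dots> = 1" using X[of c] by (simp add: power2_commute)
    finally have "z - k \<in> sphere 0 1" by simp
    then show "z \<in> set_sum KK_fan (sphere 0 1)" unfolding set_sum_def using kK
      by (intro CollectI exI[of _ k] exI[of _ "z - k"]) auto
  qed
  have "ball z0 (1/20) \<subseteq> interior (set_sum KK_fan (sphere 0 1))"
    using sub by (intro interior_maximal) auto
  moreover have "z0 \<in> ball z0 (1/20)" by simp
  ultimately show ?thesis by blast
qed

end
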